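(* Let $n\ge 3$ and let $(u,v)$ be an MAB pair of binary words with $|u|=|v|=n$. Put $i=\mathrm{lsb}(u,v)$ and $j=\mathrm{lsb}(v,u)$. Then $i+j>n$ if and only if there exist $\alpha,\gamma,\beta,\beta',\gamma',\alpha'\in\Sigma^+$ such that $u=\alpha\gamma\beta$, $v=\beta'\gamma'\alpha'$, $\alpha\gamma\sim_{\mathrm{abl}}\gamma'\alpha'$, $\gamma\beta\sim_{\mathrm{abl}}\beta'\gamma'$, $|\alpha\gamma|=j$, $|\gamma\beta|=i$, and both $(\gamma\beta,\beta'\gamma')$ and $(\alpha\gamma,\gamma'\alpha')$ are MAU pairs.
   Context: Let $\Sigma=\{a,b\}$. For a word $w$ and a letter $c$, $|w|_c$ denotes the number of occurrences of $c$ in $w$. Two words $x,y$ are abelian equivalent, written $x\sim_{\mathrm{abl}}y$, if $|x|_c=|y|_c$ for all $c\in\Sigma$. For words $u,v$: a pair $(x,y)$ is an internal abelian-border of $(u,v)$ if $x$ is a nonempty proper suffix of $u$, $y$ is a proper prefix of $v$, and $x\sim_{\mathrm{abl}}y$; it is an external abelian-border of $(u,v)$ if $x$ is a nonempty proper prefix of $u$, $y$ is a proper suffix of $v$, and $x\sim_{\mathrm{abl}}y$. The pair $(u,v)$ is mutually abelian-bordered (MAB) if it has both an internal and an external abelian-border, and mutually abelian-unbordered (MAU) if it has neither. If $(u,v)$ has an internal abelian-border, $\mathrm{sb}(u,v)$ denotes its internal abelian-border $(x,y)$ of minimal length and $\mathrm{lsb}(u,v)=|x|$ is that minimal length. *)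

theory Defs
  imports Main "HOL-Library.Sublist"
begin

datatype letter = a | b

type_synonym word = "letter list"

definition abl_eq :: "word \<Rightarrow> word \<Rightarrow> bool" where
  "abl_eq x y \<longleftrightarrow> (\<forall>c. count_list x c = count_list y c)"

definition int_border :: "word \<Rightarrow> word \<Rightarrow> word \<Rightarrow> word \<Rightarrow> bool" where
  "int_border u v x y \<longleftrightarrow> x \<noteq> [] \<and> strict_suffix x u \<and> strict_prefix y v \<and> abl_eq x y"

definition ext_border :: "word \<Rightarrow> word \<Rightarrow> word \<Rightarrow> word \<Rightarrow> bool" where
  "ext_border u v x y \<longleftrightarrow> x \<noteq> [] \<and> strict_prefix x u \<and> strict_suffix y v \<and> abl_eq x y"

definition MAB :: "word \<Rightarrow> word \<Rightarrow> bool" where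
  "MAB u v \<longleftrightarrow> (\<exists>x y. int_border u v x y) \<and> (\<exists>x y. ext_border u v x y)"

definition MAU :: "word \<Rightarrow> word \<Rightarrow> bool" where
  "MAU u v \<longleftrightarrow> \<not> (\<exists>x y. int_border u v x y) \<and> \<not> (\<exists>x y. ext_border u v x y)"

text \<open>Length of the shortest internal abelian-border (meaningful when one exists).\<close>
definition lsb :: "word \<Rightarrow> word \<Rightarrow> nat" where
  "lsb u v = (LEAST k. \<exists>x y. int_border u v x y \<and> length x = k)"

end

theory Submission
  imports Defs
begin

lemma len_count: "length (x::word) = count_list x a + count_list x b"
proof (induction x)
  case (Cons c x) then show ?case by (cases c) auto
qed simp

lemma abl_len: "abl_eq x y \<Longrightarrow> length x = length y"
  unfolding abl_eq_def by (metis len_count)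

lemma abl_sym: "abl_eq x y \<Longrightarrow> abl_eq y x"
  unfolding abl_eq_def by simp

lemma abl_cancel: "abl_eq (x @ x2) (y2 @ y) \<Longrightarrow> abl_eq x y \<Longrightarrow> abl_eq x2 y2"
  unfolding abl_eq_def by (metis add.commute add_left_cancel count_list_append)

lemma int_ext: "ext_border u v x y \<longleftrightarrow> int_border v u y x"
  unfolding ext_border_def int_border_def
  using abl_len[of x y] abl_sym[of x y] abl_sym[of y x] by auto

lemma MAU_sym: "MAU X Y \<Longrightarrow> MAU Y X"
  unfolding MAU_def int_ext by blast

lemma lsb_le:
  assumes "x \<noteq> []" "suffix x u" "prefix y v" "abl_eq x y" "length x < length u" "length x < length v"
  shows "lsb u v \<le> length x"
proof -
  have "length y = length x" using abl_len[OF assms(4)] by simp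
  hence "int_border u v x y" using assms unfolding int_border_def strict_suffix_def strict_prefix_def
    by auto
  thus ?thesis unfolding lsb_def by (metis (mono_tags, lifting) Least_le)
qed

lemma lsb_wit:
  assumes "\<exists>x y. int_border u v x y"
  obtains x y where "int_border u v x y" "length x = lsb u v"
  using LeastI_ex[of "\<lambda>k. \<exists>x y. int_border u v x y \<and> length x = k"] assms
  unfolding lsb_def by blast

lemma int_props:
  assumes "int_border u v x y"
  shows "x = drop (length u - length x) u" "y = take (length x) v" "0 < length x"
    "length x < length u" "length x < length v" "abl_eq x y"
proof -
  have l: "length y = length x" using assms abl_len unfolding int_border_def by metis
  from assms obtain zs where zs: "u = zs @ x" "zs \<noteq> []" unfolding int_border_def strict_suffix_def suffix_def by auto
  from assms obtain ws where ws: "v = y @ ws" "ws \<noteq> []" unfolding int_border_def strict_prefix_def prefix_def by auto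
  show "x = drop (length u - length x) u" using zs by simp
  show "y = take (length x) v" using ws l by simp
  show "0 < length x" using assms unfolding int_border_def by simp
  show "length x < length u" using zs by simp
  show "length x < length v" using ws l by simp
  show "abl_eq x y" using assms unfolding int_border_def by simp
qed

lemma mau_gen:
  assumes "suffix X u" "prefix Y v" "abl_eq X Y" "length X = lsb u v" "\<exists>x y. int_border u v x y"
  shows "MAU X Y"
proof -
  obtain x0 y0 where w: "int_border u v x0 y0" "length x0 = lsb u v" using lsb_wit assms(5) by blast
  have Lu: "lsb u v < length u" "lsb u v < length v" using int_props[OF w(1)] w(2) by auto
  have "\<not> int_border X Y x y" for x y
  proof
    assume h: "int_border X Y x y"
    hence "x \<noteq> []" "strict_suffix x X" "strict_prefix y Y" "abl_eq x y" unfolding int_border_def by auto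
    moreover have "length x < length X"
      using \<open>strict_suffix x X\<close> by (simp add: strict_suffix_def suffix_length_less)
    moreover have "suffix x u" using \<open>strict_suffix x X\<close> assms(1)
      unfolding strict_suffix_def using suffix_order.trans by blast
    moreover have "prefix y v" using \<open>strict_prefix y Y\<close> assms(2)
      unfolding strict_prefix_def using prefix_order.trans by blast
    ultimately have "lsb u v \<le> length x" using lsb_le[of x u y v] assms(4) Lu by simp
    then show False using \<open>length x < length X\<close> assms(4) by simp
  qed
  moreover have "\<not> ext_border X Y x y" for x y
  proof
    assume h: "ext_border X Y x y"
    hence h2: "x \<noteq> []" "strict_prefix x X" "strict_suffix y Y" "abl_eq x y" unfolding ext_border_def by auto
    then obtain x2 where x2: "X = x @ x2" "x2 \<noteq> []" unfolding strict_prefix_def prefix_def by auto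
    from h2 obtain y2 where y2: "Y = y2 @ y" "y2 \<noteq> []" unfolding strict_suffix_def suffix_def by auto
    have ab: "abl_eq x2 y2" using abl_cancel assms(3) x2 y2 h2(4) by metis
    have "suffix x2 u" proof -
      have "suffix x2 X" using x2 unfolding suffix_def by blast
      thus ?thesis using assms(1) suffix_order.trans by blast
    qed
    moreover have "prefix y2 v" proof -
      have "prefix y2 Y" using y2 unfolding prefix_def by blast
      thus ?thesis using assms(2) prefix_order.trans by blast
    qed
    moreover have "length x2 < length X" using x2 h2(1) by simp
    moreover have lt: "length x2 < lsb u v" using x2 h2(1) assms(4) by (cases x) auto
    ultimately have "lsb u v \<le> length x2" using lsb_le[of x2 u y2 v] ab x2(2) Lu by simp
    then show False using lt by simp
  qed
  ultimately show ?thesis unfolding MAU_def by blast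
qed

theorem mainTheorem3:
  fixes u v :: word and n :: nat
  assumes "n \<ge> 3" and "length u = n" and "length v = n" and "MAB u v"
  shows "lsb u v + lsb v u > n \<longleftrightarrow>
    (\<exists>\<alpha> \<gamma> \<beta> \<beta>' \<gamma>' \<alpha>'.
       \<alpha> \<noteq> [] \<and> \<gamma> \<noteq> [] \<and> \<beta> \<noteq> [] \<and> \<beta>' \<noteq> [] \<and> \<gamma>' \<noteq> [] \<and> \<alpha>' \<noteq> [] \<and>
       u = \<alpha> @ \<gamma> @ \<beta> \<and> v = \<beta>' @ \<gamma>' @ \<alpha>' \<and>
       abl_eq (\<alpha> @ \<gamma>) (\<gamma>' @ \<alpha>') \<and> abl_eq (\<gamma> @ \<beta>) (\<beta>' @ \<gamma>') \<and>
       length (\<alpha> @ \<gamma>) = lsb v u \<and> length (\<gamma> @ \<beta>) = lsb u v \<and>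
       MAU (\<gamma> @ \<beta>) (\<beta>' @ \<gamma>') \<and> MAU (\<alpha> @ \<gamma>) (\<gamma>' @ \<alpha>'))"
proof
  assume "lsb u v + lsb v u > n"
  define i where "i = lsb u v"
  define j where "j = lsb v u"
  have e1: "\<exists>x y. int_border u v x y" using assms(4) unfolding MAB_def by blast
  have e2: "\<exists>x y. int_border v u x y" using assms(4) int_ext unfolding MAB_def by blast
  obtain xi yi where wi: "int_border u v xi yi" "length xi = i" using lsb_wit[OF e1] i_def by metis
  obtain xj yj where wj: "int_border v u xj yj" "length xj = j" using lsb_wit[OF e2] j_def by metis
  note pi = int_props[OF wi(1)] and pj = int_props[OF wj(1)]
  have ij: "0 < i" "i < n" "0 < j" "j < n" "i + j > n"
    using pi pj wi(2) wj(2) assms \<open>lsb u v + lsb v u > n\<close> i_def j_def by auto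
  define \<alpha> where "\<alpha> = take (n - i) u"
  define \<gamma> where "\<gamma> = take (i + j - n) (drop (n - i) u)"
  define \<beta> where "\<beta> = drop j u"
  define \<beta>' where "\<beta>' = take (n - j) v"
  define \<gamma>' where "\<gamma>' = take (i + j - n) (drop (n - j) v)"
  define \<alpha>' where "\<alpha>' = drop i v"
  have ag: "\<alpha> @ \<gamma> = take j u" unfolding \<alpha>_def \<gamma>_def using ij
    by (simp add: take_add[symmetric])
  have gb: "\<gamma> @ \<beta> = drop (n - i) u" proof -
    have "drop j u = drop (i + j - n) (drop (n - i) u)" using ij by (simp add: drop_drop)
    thus ?thesis unfolding \<beta>_def \<gamma>_def by (metis append_take_drop_id)
  qed
  have bg: "\<beta>' @ \<gamma>' = take i v" unfolding \<beta>'_def \<gamma>'_def using ij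
    by (simp add: take_add[symmetric])
  have ga: "\<gamma>' @ \<alpha>' = drop (n - j) v" proof -
    have "drop i v = drop (i + j - n) (drop (n - j) v)" using ij by (simp add: drop_drop)
    thus ?thesis unfolding \<alpha>'_def \<gamma>'_def by (metis append_take_drop_id)
  qed
  have u: "u = \<alpha> @ \<gamma> @ \<beta>" using ag \<beta>_def by (metis append.assoc append_take_drop_id)
  have v: "v = \<beta>' @ \<gamma>' @ \<alpha>'" using bg \<alpha>'_def by (metis append.assoc append_take_drop_id)
  have a1: "abl_eq (\<gamma> @ \<beta>) (\<beta>' @ \<gamma>')" using gb bg pi wi(2) assms by metis
  have a2: "abl_eq (\<gamma>' @ \<alpha>') (\<alpha> @ \<gamma>)" using ga ag pj wj(2) assms by metis
  have m1: "MAU (\<gamma> @ \<beta>) (\<beta>' @ \<gamma>')"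
    by (rule mau_gen[OF _ _ a1 _ e1]) (use gb bg ij assms i_def suffix_drop take_is_prefix in auto)
  have m2: "MAU (\<gamma>' @ \<alpha>') (\<alpha> @ \<gamma>)"
    by (rule mau_gen[OF _ _ a2 _ e2]) (use ga ag ij assms j_def suffix_drop take_is_prefix in auto)
  show "\<exists>\<alpha> \<gamma> \<beta> \<beta>' \<gamma>' \<alpha>'.
       \<alpha> \<noteq> [] \<and> \<gamma> \<noteq> [] \<and> \<beta> \<noteq> [] \<and> \<beta>' \<noteq> [] \<and> \<gamma>' \<noteq> [] \<and> \<alpha>' \<noteq> [] \<and>
       u = \<alpha> @ \<gamma> @ \<beta> \<and> v = \<beta>' @ \<gamma>' @ \<alpha>' \<and>
       abl_eq (\<alpha> @ \<gamma>) (\<gamma>' @ \<alpha>') \<and> abl_eq (\<gamma> @ \<beta>) (\<beta>' @ \<gamma>') \<and>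
       length (\<alpha> @ \<gamma>) = lsb v u \<and> length (\<gamma> @ \<beta>) = lsb u v \<and>
       MAU (\<gamma> @ \<beta>) (\<beta>' @ \<gamma>') \<and> MAU (\<alpha> @ \<gamma>) (\<gamma>' @ \<alpha>')"
    apply (rule exI[of _ \<alpha>], rule exI[of _ \<gamma>], rule exI[of _ \<beta>],
           rule exI[of _ \<beta>'], rule exI[of _ \<gamma>'], rule exI[of _ \<alpha>'])
    using u v a1 abl_sym[OF a2] m1 MAU_sym[OF m2] ij assms(2,3) i_def j_def ag gb
    unfolding \<alpha>_def \<gamma>_def \<beta>_def \<beta>'_def \<gamma>'_def \<alpha>'_def
    by auto
next
  assume "\<exists>\<alpha> \<gamma> \<beta> \<beta>' \<gamma>' \<alpha>'.
       \<alpha> \<noteq> [] \<and> \<gamma> \<noteq> [] \<and> \<beta> \<noteq> [] \<and> \<beta>' \<noteq> [] \<and> \<gamma>' \<noteq> [] \<and> \<alpha>' \<noteq> [] \<and>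
       u = \<alpha> @ \<gamma> @ \<beta> \<and> v = \<beta>' @ \<gamma>' @ \<alpha>' \<and>
       abl_eq (\<alpha> @ \<gamma>) (\<gamma>' @ \<alpha>') \<and> abl_eq (\<gamma> @ \<beta>) (\<beta>' @ \<gamma>') \<and>
       length (\<alpha> @ \<gamma>) = lsb v u \<and> length (\<gamma> @ \<beta>) = lsb u v \<and>
       MAU (\<gamma> @ \<beta>) (\<beta>' @ \<gamma>') \<and> MAU (\<alpha> @ \<gamma>) (\<gamma>' @ \<alpha>')"
  then obtain \<alpha> \<gamma> \<beta> \<beta>' \<gamma>' \<alpha>' where h: "\<gamma> \<noteq> []" "u = \<alpha> @ \<gamma> @ \<beta>"
    "length (\<alpha> @ \<gamma>) = lsb v u" "length (\<gamma> @ \<beta>) = lsb u v" by blast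
  have "length u = length \<alpha> + length \<gamma> + length \<beta>" using h(2) by simp
  moreover have "length \<gamma> > 0" using h(1) by simp
  ultimately show "lsb u v + lsb v u > n" using assms(2) h(3,4) by (simp only: length_append)
qed

end
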